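(* For every $m\ge 0$, $p_m(x)=p_0(x)\,q_m(x)$. Moreover $p_m$ is the characteristic polynomial of $J_m$, so $\mathrm{Spec}(J_m)$ consists of $\mathrm{Spec}(J_0)$ together with the zeros of $q_m$.
   Context: Let $k\ge 2$, $a_0,\dots,a_{k-1}\in\mathbb{R}$, $a_0\ne0$. Define $b_{0,j}=a_j$ ($0\le j\le k-1$) and for $m\ge0$: $b_{m+1,j}=a_jb_{m,0}+b_{m,j+1}$ ($0\le j\le k-2$), $b_{m+1,k-1}=a_{k-1}b_{m,0}$. These are the coefficients of the $m$-times expanded linear equation $z_{n+1}=\sum_{j=0}^{k-1}b_{m,j}z_{n-m-j}$ of $x_{n+1}=\sum_{j=0}^{k-1}a_jx_{n-j}$. Define the polynomials $$p_m(x)=x^{k+m}-\sum_{j=0}^{k-1}b_{m,j}x^{k-j-1},\qquad q_m(x)=x^m+\sum_{i=0}^{m-1}b_{i,0}x^{m-i-1},$$ with $q_0\equiv1$. $J_m$ is the $(m+k)\times(m+k)$ matrix whose first row is $(0,\dots,0,b_{m,0},b_{m,1},\dots,b_{m,k-1})$ (with $m$ leading zeros), with ones at positions $(i+1,i)$ for $i=1,\dots,m+k-1$ and zeros elsewhere (the Jacobian of the $m$-th expanded equation). *)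

theory Defs
  imports "Jordan_Normal_Form.Char_Poly" "HOL-Computational_Algebra.Polynomial"
begin

text \<open>Coefficients b_{m,j} of the m-times expanded equation, for given k and a_0..a_{k-1}
  (a given as a function nat => real; only a 0, ..., a (k-1) are used).
  Values for j >= k are irrelevant junk.\<close>
fun bcoef :: "nat \<Rightarrow> (nat \<Rightarrow> real) \<Rightarrow> nat \<Rightarrow> nat \<Rightarrow> real" where
  "bcoef k a 0 j = a j"
| "bcoef k a (Suc m) j =
     (if j + 1 < k then a j * bcoef k a m 0 + bcoef k a m (j + 1)
      else a (k - 1) * bcoef k a m 0)"

definition pm :: "nat \<Rightarrow> (nat \<Rightarrow> real) \<Rightarrow> nat \<Rightarrow> real poly" where
  "pm k a m = monom 1 (k + m) - (\<Sum>j<k. monom (bcoef k a m j) (k - j - 1))"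

definition qm :: "nat \<Rightarrow> (nat \<Rightarrow> real) \<Rightarrow> nat \<Rightarrow> real poly" where
  "qm k a m = monom 1 m + (\<Sum>i<m. monom (bcoef k a i 0) (m - i - 1))"

definition Jm :: "nat \<Rightarrow> (nat \<Rightarrow> real) \<Rightarrow> nat \<Rightarrow> real mat" where
  "Jm k a m = mat (m + k) (m + k)
     (\<lambda>(i, j). if i = 0 then (if j < m then 0 else bcoef k a m (j - m))
               else if i = j + 1 then 1 else 0)"

end

theory Submission
  imports Defs
begin

lemma coeff_pm:
  "coeff (pm k a m) n = (if n = k + m then 1 else 0) - (if n < k then bcoef k a m (k - 1 - n) else 0)"
proof -
  have "(\<Sum>j<k. (if k - j - 1 = n then bcoef k a m j else 0)) =
        (\<Sum>j<k. (if j = k - 1 - n \<and> n < k then bcoef k a m (k - 1 - n) else 0))"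
    by (rule sum.cong) auto
  also have "\<dots> = (if n < k then bcoef k a m (k - 1 - n) else 0)"
    by (cases "n < k") auto
  finally show ?thesis unfolding pm_def by (simp add: coeff_sum coeff_monom)
qed

lemma pm_Suc:
  assumes "k \<ge> 2"
  shows "pm k a (Suc m) = pCons 0 (pm k a m) + Polynomial.smult (bcoef k a m 0) (pm k a 0)"
proof (rule poly_eqI)
  fix n
  show "coeff (pm k a (Suc m)) n = coeff (pCons 0 (pm k a m) + Polynomial.smult (bcoef k a m 0) (pm k a 0)) n"
  proof (cases n)
    case 0
    then show ?thesis using assms by (simp add: coeff_pm)
  next
    case (Suc n')
    show ?thesis
    proof (cases "Suc n' < k")
      case True
      define j where "j = k - 1 - Suc n'"
      have j1: "k - 1 - n' = j + 1" and j2: "j + 1 < k" and j3: "k - 1 - Suc n' = j" using True j_def by auto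
      have "bcoef k a (Suc m) j = a j * bcoef k a m 0 + bcoef k a m (j + 1)" using j2 by simp
      then show ?thesis using True assms unfolding Suc coeff_pCons_Suc coeff_add coeff_smult coeff_pm j1 j3
        by simp
    next
      case False
      then show ?thesis using assms unfolding Suc coeff_pCons_Suc coeff_add coeff_smult coeff_pm
        by auto
    qed
  qed
qed

lemma sum_pCons0: "(\<Sum>i\<in>A. pCons 0 (f i)) = pCons 0 (\<Sum>i\<in>A. f i)"
  by (induction A rule: infinite_finite_induct) auto

lemma qm_Suc: "qm k a (Suc m) = pCons 0 (qm k a m) + [:bcoef k a m 0:]"
proof -
  have "(\<Sum>i<m. monom (bcoef k a i 0) (Suc m - i - 1)) = pCons 0 (\<Sum>i<m. monom (bcoef k a i 0) (m - i - 1))"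
  proof -
    have "(\<Sum>i<m. monom (bcoef k a i 0) (Suc m - i - 1)) = (\<Sum>i<m. pCons 0 (monom (bcoef k a i 0) (m - i - 1)))"
      by (rule sum.cong) (auto simp: Suc_diff_Suc monom_Suc[symmetric])
    also have "\<dots> = pCons 0 (\<Sum>i<m. monom (bcoef k a i 0) (m - i - 1))"
      by (rule sum_pCons0)
    finally show ?thesis .
  qed
  then show ?thesis unfolding qm_def
    by (simp add: monom_Suc monom_0)
qed

lemma pm_qm: assumes "k \<ge> 2" shows "pm k a m = pm k a 0 * qm k a m"
proof (induction m)
  case 0
  then show ?case by (simp add: qm_def)
next
  case (Suc m)
  have "pm k a (Suc m) = pCons 0 (pm k a 0 * qm k a m) + Polynomial.smult (bcoef k a m 0) (pm k a 0)"
    unfolding pm_Suc[OF assms, of a m] Suc ..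
  also have "\<dots> = pm k a 0 * (pCons 0 (qm k a m) + [:bcoef k a m 0:])"
    by (simp add: distrib_left)
  also have "\<dots> = pm k a 0 * qm k a (Suc m)" by (simp add: qm_Suc)
  finally show ?case .
qed

definition compm :: "nat \<Rightarrow> (nat \<Rightarrow> real) \<Rightarrow> real mat" where
  "compm n c = mat n n (\<lambda>(i, j). if i = 0 then c j else if i = j + 1 then 1 else 0)"

lemma cpm_entry:
  assumes "A \<in> carrier_mat n n" "i < n" "j < n"
  shows "char_poly_matrix A $$ (i, j) = (if i = j then [:0,1:] else 0) - [:A $$ (i, j):]"
  using assms unfolding char_poly_matrix_def by auto

lemma char_poly_compm:
  "char_poly (compm n c) = monom 1 n - (\<Sum>j<n. monom (c j) (n - 1 - j))"
proof (induction n)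
  case 0
  have "compm 0 c \<in> carrier_mat 0 0" by (simp add: compm_def)
  then show ?case unfolding char_poly_def by (simp add: monom_0)
next
  case (Suc n)
  define A where "A = compm (Suc n) c"
  define D where "D = char_poly_matrix A"
  have A: "A \<in> carrier_mat (Suc n) (Suc n)" by (simp add: A_def compm_def)
  have D: "D \<in> carrier_mat (Suc n) (Suc n)" using A by (simp add: D_def)
  have Dij: "D $$ (i, j) = (if i = j then [:0,1:] else 0) - [:(if i = 0 then c j else if i = j + 1 then 1 else 0):]"
    if "i < Suc n" "j < Suc n" for i j
    using cpm_entry[OF A that] that by (simp add: D_def A_def compm_def)
  have lap: "det D = (\<Sum>i<Suc n. D $$ (i, n) * cofactor D i n)"
    by (rule laplace_expansion_column[OF D]) simp
  show ?case
  proof (cases "n = 0")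
    case True
    have "mat_delete D 0 0 \<in> carrier_mat 0 0" using mat_delete_carrier[OF D, of 0 0] True by simp
    then have "det (mat_delete D 0 0) = 1" by simp
    then have "det D = ([:0,1:] - [:c 0:])" using lap True Dij[of 0 0] by (simp add: cofactor_def)
    then show ?thesis using True unfolding char_poly_def D_def A_def
      by (simp add: monom_Suc monom_0)
  next
    case False
    have "(\<Sum>i<Suc n. D $$ (i, n) * cofactor D i n) = (\<Sum>i\<in>{0, n}. D $$ (i, n) * cofactor D i n)"
    proof (rule sum.mono_neutral_right)
      show "\<forall>i\<in>{..<Suc n} - {0, n}. D $$ (i, n) * cofactor D i n = 0"
        using Dij by auto
    qed auto
    also have "\<dots> = D $$ (0, n) * cofactor D 0 n + D $$ (n, n) * cofactor D n n"
      using False by simp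
    finally have lap2: "det D = D $$ (0, n) * cofactor D 0 n + D $$ (n, n) * cofactor D n n"
      using lap by simp
    have d0: "D $$ (0, n) = - [:c n:]" using Dij[of 0 n] False by simp
    have dn: "D $$ (n, n) = [:0,1:]" using Dij[of n n] False by simp
    have del_nn: "mat_delete D n n = char_poly_matrix (compm n c)"
    proof (rule eq_matI)
      fix i j assume ij: "i < dim_row (char_poly_matrix (compm n c))" "j < dim_col (char_poly_matrix (compm n c))"
      then have ij': "i < n" "j < n" by (simp_all add: compm_def char_poly_matrix_def)
      have "compm n c \<in> carrier_mat n n" by (simp add: compm_def)
      from cpm_entry[OF this ij'] show "mat_delete D n n $$ (i, j) = char_poly_matrix (compm n c) $$ (i, j)"
        using ij' D Dij[of i j] by (simp add: mat_delete_def compm_def)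
    qed (use D in \<open>simp_all add: compm_def char_poly_matrix_def\<close>)
    define U where "U = mat_delete D 0 n"
    have U: "U \<in> carrier_mat n n" using D mat_delete_carrier[OF D, of 0 n] by (simp add: U_def)
    have Uij: "U $$ (i, j) = (if Suc i = j then [:0,1:] else 0) - (if i = j then 1 else 0)"
      if "i < n" "j < n" for i j
      using that D Dij[of "Suc i" j] by (auto simp: U_def mat_delete_def one_pCons)
    have "upper_triangular U" unfolding upper_triangular_def using U Uij by auto
    then have "det U = prod_list (diag_mat U)" using det_upper_triangular U by blast
    also have "diag_mat U = replicate n (-1)"
      by (rule nth_equalityI) (use U Uij in \<open>auto simp: diag_mat_def\<close>)
    finally have detU: "det U = (-1) ^ n" by simp
    have c0: "cofactor D 0 n = 1"
      unfolding cofactor_def U_def[symmetric] detU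
      by (simp flip: power_mult_distrib)
    have cn: "cofactor D n n = char_poly (compm n c)"
      unfolding cofactor_def del_nn char_poly_def by simp
    have "char_poly A = [:0,1:] * char_poly (compm n c) - [:c n:]"
      unfolding char_poly_def D_def[symmetric] lap2 d0 dn c0 cn by simp
    also have "\<dots> = monom 1 (Suc n) - (\<Sum>j<Suc n. monom (c j) (Suc n - 1 - j))"
    proof -
      have "(\<Sum>j<n. monom (c j) (Suc n - 1 - j)) = (\<Sum>j<n. pCons 0 (monom (c j) (n - 1 - j)))"
        by (rule sum.cong) (auto simp: monom_Suc[symmetric] Suc_diff_Suc)
      also have "\<dots> = pCons 0 (\<Sum>j<n. monom (c j) (n - 1 - j))" by (rule sum_pCons0)
      finally show ?thesis unfolding Suc by (simp add: monom_Suc monom_0)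
    qed
    finally show ?thesis unfolding A_def .
  qed
qed

lemma sum_split_add: "(\<Sum>j<(m::nat)+k. f j) = (\<Sum>j<m. f j) + (\<Sum>j<k. f (m + j))"
  by (induction k) (simp_all add: add.assoc)

lemma char_poly_Jm: "char_poly (Jm k a m) = pm k a m"
proof -
  define c where "c j = (if j < m then 0 else bcoef k a m (j - m))" for j
  have J: "Jm k a m = compm (m + k) c" unfolding Jm_def compm_def c_def by simp
  have "(\<Sum>j<m+k. monom (c j) (m + k - 1 - j)) =
        (\<Sum>j<m. monom (c j) (m + k - 1 - j)) + (\<Sum>j<k. monom (c (m + j)) (m + k - 1 - (m + j)))"
    by (rule sum_split_add)
  also have "\<dots> = (\<Sum>j<k. monom (bcoef k a m j) (k - j - 1))"
    by (simp add: c_def)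
  finally show ?thesis unfolding J char_poly_compm pm_def by (simp add: add.commute)
qed

lemma eig_Jm: "eigenvalue (map_mat complex_of_real (Jm k a m)) z \<longleftrightarrow>
   poly (map_poly complex_of_real (pm k a m)) z = 0"
proof -
  have C: "Jm k a m \<in> carrier_mat (m+k) (m+k)" by (simp add: Jm_def)
  then have C': "map_mat complex_of_real (Jm k a m) \<in> carrier_mat (m+k) (m+k)" by simp
  show ?thesis unfolding eigenvalue_root_char_poly[OF C'] of_real_hom.char_poly_hom[OF C] char_poly_Jm ..
qed

theorem mainTheorem5:
  fixes k :: nat and a :: "nat \<Rightarrow> real"
  assumes "k \<ge> 2" and "a 0 \<noteq> 0"
  shows "\<forall>m. pm k a m = pm k a 0 * qm k a m
          \<and> char_poly (Jm k a m) = pm k a m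
          \<and> {z. eigenvalue (map_mat complex_of_real (Jm k a m)) z}
              = {z. eigenvalue (map_mat complex_of_real (Jm k a 0)) z}
                \<union> {z. poly (map_poly complex_of_real (qm k a m)) z = 0}"
proof (intro allI conjI)
  fix m
  show pq: "pm k a m = pm k a 0 * qm k a m" by (rule pm_qm[OF assms(1)])
  show "char_poly (Jm k a m) = pm k a m" by (rule char_poly_Jm)
  show "{z. eigenvalue (map_mat complex_of_real (Jm k a m)) z}
              = {z. eigenvalue (map_mat complex_of_real (Jm k a 0)) z}
                \<union> {z. poly (map_poly complex_of_real (qm k a m)) z = 0}"
  proof -
    interpret mh: map_poly_comm_ring_hom complex_of_real ..
    show ?thesis unfolding eig_Jm pq by (auto simp: mh.hom_mult)
  qed
qed

end
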